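(* Let $n\geq 2$ and let $\mathcal{G}=(\mathcal{V},\mathcal{E})$ be a directed graph on $\mathcal{V}=\{1,\ldots,n\}$ in which every node has at least one outgoing edge, with hyperlink matrix $A$, let $m\in(0,1)$, and let $x^*$ be the PageRank vector. Let $\{\phi(k)\}_{k\geq 0}$ be a sequence of subsets $\phi(k)\subset\mathcal{V}$ such that every $i\in\mathcal{V}$ belongs to $\phi(k)$ for infinitely many $k$. Consider the algorithm with initial states $x_i(0)=z_i(0)=m/n$ for all $i$, and for $k\geq 0$ and each $i\in\mathcal{V}$, $$x_i(k+1)=x_i(k)+\sum_{j\in\mathcal{L}_i^{\text{in}}\cap\phi(k)}\frac{1-m}{n_j}z_j(k),$$ $$z_i(k+1)=\begin{cases}\displaystyle\sum_{j\in\mathcal{L}_i^{\text{in}}\cap\phi(k)}\frac{1-m}{n_j}z_j(k)&\text{if } i\in\phi(k),\\ \displaystyle z_i(k)+\sum_{j\in\mathcal{L}_i^{\text{in}}\cap\phi(k)}\frac{1-m}{n_j}z_j(k)&\text{otherwise.}\end{cases}$$ Then $x(k)\leq x(k+1)\leq x^*$ for all $k\geq 0$.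
   Context: Write $(i,j)\in\mathcal{E}$ if page $i$ has a link to page $j$. $\mathcal{L}_j^{\text{out}}=\{i:(j,i)\in\mathcal{E}\}$, $\mathcal{L}_i^{\text{in}}=\{j:(j,i)\in\mathcal{E}\}$, and $n_j=|\mathcal{L}_j^{\text{out}}|\geq 1$. The hyperlink matrix $A=(a_{ij})$ is defined by $a_{ij}=1/n_j$ if $i\in\mathcal{L}_j^{\text{out}}$ and $a_{ij}=0$ otherwise (column stochastic). The PageRank vector $x^*$ satisfies $x^*=(1-m)Ax^*+\frac{m}{n}\mathbf{1}_n$ and $\mathbf{1}_n^Tx^*=1$. Here $x(k)=(x_1(k),\ldots,x_n(k))^T$ and inequalities between vectors are entrywise. *)

theory Defs
  imports "HOL-Analysis.Analysis"
begin

text \<open>Graph on nodes V = {1..n}; E is the edge set, (i,j) \<in> E means page i links to page j.\<close>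

definition L_out :: "(nat \<times> nat) set \<Rightarrow> nat \<Rightarrow> nat set" where
  "L_out E j = {i. (j, i) \<in> E}"

definition L_in :: "(nat \<times> nat) set \<Rightarrow> nat \<Rightarrow> nat set" where
  "L_in E i = {j. (j, i) \<in> E}"

definition outdeg :: "(nat \<times> nat) set \<Rightarrow> nat \<Rightarrow> nat" where
  "outdeg E j = card (L_out E j)"

definition hyperlink :: "(nat \<times> nat) set \<Rightarrow> nat \<Rightarrow> nat \<Rightarrow> real" where
  "hyperlink E i j = (if i \<in> L_out E j then 1 / real (outdeg E j) else 0)"

definition is_pagerank :: "nat \<Rightarrow> (nat \<times> nat) set \<Rightarrow> real \<Rightarrow> (nat \<Rightarrow> real) \<Rightarrow> bool" where
  "is_pagerank n E m xs \<longleftrightarrow>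
     (\<forall>i\<in>{1..n}. xs i = (1 - m) * (\<Sum>j\<in>{1..n}. hyperlink E i j * xs j) + m / real n)
     \<and> (\<Sum>i\<in>{1..n}. xs i) = 1"

definition incr :: "nat \<Rightarrow> (nat \<times> nat) set \<Rightarrow> real \<Rightarrow> nat set \<Rightarrow> (nat \<Rightarrow> real) \<Rightarrow> nat \<Rightarrow> real" where
  "incr n E m S z i = (\<Sum>j\<in>L_in E i \<inter> S. (1 - m) / real (outdeg E j) * z j)"

fun pr_alg :: "nat \<Rightarrow> (nat \<times> nat) set \<Rightarrow> real \<Rightarrow> (nat \<Rightarrow> nat set) \<Rightarrow> nat
                 \<Rightarrow> (nat \<Rightarrow> real) \<times> (nat \<Rightarrow> real)" where
  "pr_alg n E m \<phi> 0 = ((\<lambda>i. m / real n), (\<lambda>i. m / real n))"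
| "pr_alg n E m \<phi> (Suc k) =
     (let (x, z) = pr_alg n E m \<phi> k in
      ((\<lambda>i. x i + incr n E m (\<phi> k) z i),
       (\<lambda>i. if i \<in> \<phi> k then incr n E m (\<phi> k) z i
            else z i + incr n E m (\<phi> k) z i)))"

definition alg_x where "alg_x n E m \<phi> k = fst (pr_alg n E m \<phi> k)"
definition alg_z where "alg_z n E m \<phi> k = snd (pr_alg n E m \<phi> k)"

end

theory Submission
  imports Defs
begin

lemma nonneg_sol:
  fixes h :: "nat \<Rightarrow> nat \<Rightarrow> real" and w :: "nat \<Rightarrow> real" and I :: "nat set"
  assumes fin: "finite I" and m0: "0 < m" and m1: "m < 1"
    and col: "\<forall>j\<in>I. (\<Sum>i\<in>I. h i j) \<le> 1"
    and hnn: "\<forall>i\<in>I. \<forall>j\<in>I. h i j \<ge> 0"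
    and eq: "\<forall>i\<in>I. w i \<ge> (1 - m) * (\<Sum>j\<in>I. h i j * w j)"
  shows "\<forall>i\<in>I. w i \<ge> 0"
proof (rule ccontr)
  assume neg: "\<not> ?thesis"
  define N where "N = {i\<in>I. w i < 0}"
  have NI: "N \<subseteq> I" by (auto simp: N_def)
  have finN: "finite N" using fin NI finite_subset by blast
  have Nne: "N \<noteq> {}" using neg by (auto simp: N_def)
  have sneg: "(\<Sum>i\<in>N. w i) < 0"
  proof -
    have "0 < (\<Sum>i\<in>N. - w i)" using finN Nne by (intro sum_pos) (auto simp: N_def)
    thus ?thesis by (simp add: sum_negf)
  qed
  have "(\<Sum>i\<in>N. w i) \<ge> (\<Sum>i\<in>N. (1 - m) * (\<Sum>j\<in>I. h i j * w j))"
    using eq NI by (intro sum_mono) auto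
  moreover have "(\<Sum>j\<in>I. h i j * w j) \<ge> (\<Sum>j\<in>N. h i j * w j)" if "i \<in> N" for i
  proof -
    have "(\<Sum>j\<in>I. h i j * w j) = (\<Sum>j\<in>N. h i j * w j) + (\<Sum>j\<in>I-N. h i j * w j)"
      using fin NI by (metis add.commute sum.subset_diff)
    moreover have "(\<Sum>j\<in>I-N. h i j * w j) \<ge> 0"
      using hnn that NI by (intro sum_nonneg) (auto simp: N_def)
    ultimately show ?thesis by simp
  qed
  hence "(\<Sum>i\<in>N. (1 - m) * (\<Sum>j\<in>I. h i j * w j)) \<ge> (\<Sum>i\<in>N. (1 - m) * (\<Sum>j\<in>N. h i j * w j))"
    using m1 by (intro sum_mono mult_left_mono) auto
  moreover have "(\<Sum>i\<in>N. (1 - m) * (\<Sum>j\<in>N. h i j * w j)) = (1 - m) * (\<Sum>j\<in>N. w j * (\<Sum>i\<in>N. h i j))"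
  proof -
    have "(\<Sum>i\<in>N. (1 - m) * (\<Sum>j\<in>N. h i j * w j)) = (1 - m) * (\<Sum>i\<in>N. \<Sum>j\<in>N. h i j * w j)"
      by (simp add: sum_distrib_left)
    also have "(\<Sum>i\<in>N. \<Sum>j\<in>N. h i j * w j) = (\<Sum>j\<in>N. \<Sum>i\<in>N. h i j * w j)"
      by (rule sum.swap)
    also have "\<dots> = (\<Sum>j\<in>N. w j * (\<Sum>i\<in>N. h i j))"
      by (simp add: sum_distrib_left mult.commute)
    finally show ?thesis .
  qed
  moreover have "(\<Sum>j\<in>N. w j * (\<Sum>i\<in>N. h i j)) \<ge> (\<Sum>j\<in>N. w j)"
  proof (intro sum_mono)
    fix j assume j: "j \<in> N"
    have "(\<Sum>i\<in>N. h i j) \<le> (\<Sum>i\<in>I. h i j)"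
      using fin NI hnn j by (intro sum_mono2) auto
    also have "\<dots> \<le> 1" using col j NI by auto
    finally have "(\<Sum>i\<in>N. h i j) \<le> 1" .
    moreover have "w j < 0" using j by (auto simp: N_def)
    ultimately show "w j * (\<Sum>i\<in>N. h i j) \<ge> w j"
      by (metis mult.right_neutral mult_left_mono_neg less_imp_le)
  qed
  ultimately have "(\<Sum>i\<in>N. w i) \<ge> (1 - m) * (\<Sum>j\<in>N. w j * (\<Sum>i\<in>N. h i j))"
      "(\<Sum>j\<in>N. w j * (\<Sum>i\<in>N. h i j)) \<ge> (\<Sum>j\<in>N. w j)"
    by linarith+
  hence "(\<Sum>i\<in>N. w i) \<ge> (1 - m) * (\<Sum>j\<in>N. w j)"
    using m1 by (smt (verit, best) mult_left_mono)
  hence "m * (\<Sum>i\<in>N. w i) \<ge> 0" by (simp add: algebra_simps)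
  moreover have "m * (\<Sum>i\<in>N. w i) < 0" using sneg m0 by (simp add: mult_pos_neg)
  ultimately show False by linarith
qed



lemma pr_alg_Suc:
  "fst (pr_alg n E m \<phi> (Suc k)) = (\<lambda>i. fst (pr_alg n E m \<phi> k) i + incr n E m (\<phi> k) (snd (pr_alg n E m \<phi> k)) i)"
  "snd (pr_alg n E m \<phi> (Suc k)) = (\<lambda>i. if i \<in> \<phi> k then incr n E m (\<phi> k) (snd (pr_alg n E m \<phi> k)) i
            else snd (pr_alg n E m \<phi> k) i + incr n E m (\<phi> k) (snd (pr_alg n E m \<phi> k)) i)"
  by (simp_all only: pr_alg.simps Let_def case_prod_beta fst_conv snd_conv)

theorem lemma3:
  fixes n :: nat and E :: "(nat \<times> nat) set" and m :: real
    and xs :: "nat \<Rightarrow> real" and \<phi> :: "nat \<Rightarrow> nat set"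
  assumes "n \<ge> 2"
    and "E \<subseteq> {1..n} \<times> {1..n}"
    and "\<forall>j\<in>{1..n}. outdeg E j \<ge> 1"
    and "0 < m" and "m < 1"
    and "is_pagerank n E m xs"
    and "\<forall>k. \<phi> k \<subseteq> {1..n}"
    and "\<forall>i\<in>{1..n}. infinite {k. i \<in> \<phi> k}"
  shows "\<forall>k. \<forall>i\<in>{1..n}.
           alg_x n E m \<phi> k i \<le> alg_x n E m \<phi> (Suc k) i
         \<and> alg_x n E m \<phi> (Suc k) i \<le> xs i"
proof -
  define I where "I = {1..n}"
  define h where "h = hyperlink E"
  define X where "X = alg_x n E m \<phi>"
  define Z where "Z = alg_z n E m \<phi>"
  have finI: "finite I" by (simp add: I_def)
  have Eb: "E \<subseteq> I \<times> I" using assms(2) by (simp add: I_def)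
  have Lin: "L_in E i \<subseteq> I" for i using Eb by (auto simp: L_in_def)
  have Lout: "L_out E j \<subseteq> I" for j using Eb by (auto simp: L_out_def)
  have m1: "0 \<le> 1 - m" using assms(5) by simp
  have X0: "X 0 = (\<lambda>i. m / real n)" and Z0: "Z 0 = (\<lambda>i. m / real n)"
    by (simp_all add: X_def Z_def alg_x_def alg_z_def)
  have XS: "X (Suc k) = (\<lambda>i. X k i + incr n E m (\<phi> k) (Z k) i)"
    and ZS: "Z (Suc k) = (\<lambda>i. if i \<in> \<phi> k then incr n E m (\<phi> k) (Z k) i
            else Z k i + incr n E m (\<phi> k) (Z k) i)" for k
    unfolding X_def Z_def alg_x_def alg_z_def
    by (simp_all only: pr_alg_Suc)
  have incr_nn: "incr n E m S z i \<ge> 0" if "\<forall>j. z j \<ge> 0" for S z i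
    unfolding incr_def using that m1 by (intro sum_nonneg) auto
  have Znn: "\<forall>j. Z k j \<ge> 0" for k
  proof (induction k)
    case 0 then show ?case using assms(4) by (simp add: Z0)
  next
    case (Suc k) then show ?case using incr_nn[of "Z k"] by (auto simp: ZS)
  qed
  have incr_eq: "incr n E m S z i = (1 - m) * (\<Sum>j\<in>I. h i j * (if j \<in> S then z j else 0))" for S z i
  proof -
    have "incr n E m S z i = (\<Sum>j\<in>I \<inter> (L_in E i \<inter> S). (1 - m) / real (outdeg E j) * z j)"
      proof -
        have "I \<inter> (L_in E i \<inter> S) = L_in E i \<inter> S" using Lin[of i] by blast
        thus ?thesis unfolding incr_def by simp
      qed
    also have "\<dots> = (\<Sum>j\<in>I. if j \<in> L_in E i \<inter> S then (1 - m) / real (outdeg E j) * z j else 0)"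
      using finI by (rule sum.inter_restrict)
    also have "\<dots> = (\<Sum>j\<in>I. (1 - m) * (h i j * (if j \<in> S then z j else 0)))"
      by (intro sum.cong) (auto simp: h_def hyperlink_def L_in_def L_out_def)
    finally show ?thesis by (simp add: sum_distrib_left)
  qed
  have col: "\<forall>j\<in>I. (\<Sum>i\<in>I. h i j) \<le> 1"
  proof
    fix j assume j: "j \<in> I"
    have "(\<Sum>i\<in>I. h i j) = (\<Sum>i\<in>I. if i \<in> L_out E j then 1 / real (outdeg E j) else 0)"
      by (simp add: h_def hyperlink_def)
    also have "\<dots> = (\<Sum>i\<in>I \<inter> L_out E j. 1 / real (outdeg E j))"
      using finI by (rule sum.inter_restrict[symmetric])
    also have "I \<inter> L_out E j = L_out E j" using Lout[of j] by blast
    also have "(\<Sum>i\<in>L_out E j. 1 / real (outdeg E j)) = 1"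
    proof -
      have "outdeg E j \<ge> 1" using assms(3) j by (simp add: I_def)
      thus ?thesis by (simp add: outdeg_def)
    qed
    finally show "(\<Sum>i\<in>I. h i j) \<le> 1" by simp
  qed
  have hnn: "\<forall>i\<in>I. \<forall>j\<in>I. h i j \<ge> 0" by (simp add: h_def hyperlink_def)
  have inv: "\<forall>i\<in>I. xs i - X k i = (1 - m) * (\<Sum>j\<in>I. h i j * (xs j - X k j + Z k j))" for k
  proof (induction k)
    case 0
    show ?case using assms(6) by (simp add: X0 Z0 is_pagerank_def I_def h_def)
  next
    case (Suc k)
    show ?case
    proof
      fix i assume i: "i \<in> I"
      have "xs i - X (Suc k) i = xs i - X k i - incr n E m (\<phi> k) (Z k) i" by (simp add: XS)
      also have "\<dots> = (1 - m) * (\<Sum>j\<in>I. h i j * (xs j - X k j + Z k j))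
          - (1 - m) * (\<Sum>j\<in>I. h i j * (if j \<in> \<phi> k then Z k j else 0))"
        using Suc[rule_format, OF i] by (simp only: incr_eq)
      also have "\<dots> = (1 - m) * (\<Sum>j\<in>I. h i j * (xs j - X k j + Z k j) - h i j * (if j \<in> \<phi> k then Z k j else 0))"
        by (simp add: sum_subtractf right_diff_distrib)
      also have "\<dots> = (1 - m) * (\<Sum>j\<in>I. h i j * (xs j - X (Suc k) j + Z (Suc k) j))"
      proof -
        have "h i j * (xs j - X k j + Z k j) - h i j * (if j \<in> \<phi> k then Z k j else 0)
            = h i j * (xs j - X (Suc k) j + Z (Suc k) j)" for j
          by (cases "j \<in> \<phi> k") (simp_all add: XS ZS right_diff_distrib distrib_left)
        thus ?thesis by simp
      qed
      finally show "xs i - X (Suc k) i = (1 - m) * (\<Sum>j\<in>I. h i j * (xs j - X (Suc k) j + Z (Suc k) j))" .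
    qed
  qed
  have wnn: "\<forall>i\<in>I. xs i - X k i \<ge> 0" for k
  proof (rule nonneg_sol[OF finI assms(4) assms(5) col hnn])
    show "\<forall>i\<in>I. xs i - X k i \<ge> (1 - m) * (\<Sum>j\<in>I. h i j * (xs j - X k j))"
    proof
      fix i assume i: "i \<in> I"
      have "(\<Sum>j\<in>I. h i j * (xs j - X k j)) \<le> (\<Sum>j\<in>I. h i j * (xs j - X k j + Z k j))"
        using hnn i Znn[of k] by (intro sum_mono) (simp add: mult_left_mono)
      hence "(1 - m) * (\<Sum>j\<in>I. h i j * (xs j - X k j)) \<le> (1 - m) * (\<Sum>j\<in>I. h i j * (xs j - X k j + Z k j))"
        using m1 by (rule mult_left_mono)
      thus "xs i - X k i \<ge> (1 - m) * (\<Sum>j\<in>I. h i j * (xs j - X k j))" using inv[of k] i by metis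
    qed
  qed
  show ?thesis
  proof (intro allI ballI conjI)
    fix k i assume i: "i \<in> {1..n}"
    show "alg_x n E m \<phi> k i \<le> alg_x n E m \<phi> (Suc k) i"
      using incr_nn[of "Z k"] Znn[of k] by (simp add: X_def[symmetric] XS)
    show "alg_x n E m \<phi> (Suc k) i \<le> xs i"
      using wnn[of "Suc k"] i by (simp add: X_def[symmetric] I_def)
  qed
qed

end
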